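(* Let $n,d\ge1$. For $k\ge1$ let $\mathbf M_k\in\mathbb R^{n\times n}$ be invertible; for $k\ge0$ let $\mathbf H_k\in\mathbb R^{d\times n}$, $\mathbf R_k$ symmetric positive definite, ${\boldsymbol\Omega}_k=\mathbf H_k^{\mathrm T}\mathbf R_k^{-1}\mathbf H_k$. Let $\mathbf M_{k:0}=\mathbf M_k\cdots\mathbf M_1$ ($\mathbf M_{0:0}=\mathbf I_n$), let $\mathbf P_0$ be symmetric positive semi-definite and $\mathbf P_{k+1}=\mathbf M_{k+1}(\mathbf I_n+\mathbf P_k{\boldsymbol\Omega}_k)^{-1}\mathbf P_k\mathbf M_{k+1}^{\mathrm T}$ for $k\ge0$. Then for every $k\ge0$, $\mathrm{rank}(\mathbf P_{k+1})=\mathrm{rank}(\mathbf P_k)$ and $$\mathrm{Im}(\mathbf P_k)=\mathbf M_{k:0}\big(\mathrm{Im}(\mathbf P_0)\big),$$ where $\mathrm{Im}(\mathbf A)=\{\mathbf A{\mathbf x}:{\mathbf x}\in\mathbb R^n\}$ is the column space. *)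

theory Defs
  imports "HOL-Analysis.Analysis"
begin

definition sym_psd :: "real^'n^'n \<Rightarrow> bool" where
  "sym_psd A \<longleftrightarrow> transpose A = A \<and> (\<forall>x. 0 \<le> x \<bullet> (A *v x))"

definition sym_pd :: "real^'n^'n \<Rightarrow> bool" where
  "sym_pd A \<longleftrightarrow> transpose A = A \<and> (\<forall>x. x \<noteq> 0 \<longrightarrow> 0 < x \<bullet> (A *v x))"

text \<open>Column space Im(A) = {A x : x}.\<close>
definition col_space :: "real^'n^'m \<Rightarrow> (real^'m) set" where
  "col_space A = range (\<lambda>x. A *v x)"

text \<open>M_{k:0} = M_k ** ... ** M_1, with M_{0:0} = I.\<close>
fun Mprod :: "(nat \<Rightarrow> real^'n^'n) \<Rightarrow> nat \<Rightarrow> real^'n^'n" where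
  "Mprod M 0 = mat 1"
| "Mprod M (Suc k) = M (Suc k) ** Mprod M k"

end

theory Submission
  imports Defs
begin

lemma inv_props:
  fixes A :: "real^'n^'n"
  assumes "invertible A"
  shows "A ** matrix_inv A = mat 1" "matrix_inv A ** A = mat 1"
proof -
  have "\<exists>A'. A ** A' = mat 1 \<and> A' ** A = mat 1" using assms unfolding invertible_def by blast
  then have "A ** matrix_inv A = mat 1 \<and> matrix_inv A ** A = mat 1"
    unfolding matrix_inv_def by (rule someI_ex)
  then show "A ** matrix_inv A = mat 1" "matrix_inv A ** A = mat 1" by auto
qed

lemma invertible_ker:
  fixes A :: "real^'n^'n"
  assumes "\<And>x. A *v x = 0 \<Longrightarrow> x = 0"
  shows "invertible A"
  using assms invertible_left_inverse matrix_left_invertible_ker by blast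

lemma inv_invertible:
  fixes A :: "real^'n^'n"
  assumes "invertible A"
  shows "invertible (matrix_inv A)"
  using inv_props[OF assms] unfolding invertible_def by blast

lemma mat_add_rdistrib:
  fixes A B C :: "real^'n^'n"
  shows "(A + B) ** C = A ** C + B ** C"
  by (simp add: matrix_eq matrix_vector_mult_add_rdistrib matrix_vector_mul_assoc[symmetric])

lemma dot_mat: "(x::real^'n) \<bullet> (A *v y) = (transpose A *v x) \<bullet> y"
  by (metis dot_lmul_matrix transpose_matrix_vector)

lemma col_right_inv:
  fixes X Y :: "real^'n^'n"
  assumes "invertible Y"
  shows "col_space (X ** Y) = col_space X"
proof -
  have "surj ((*v) Y)"
    using inv_props(1)[OF assms] matrix_right_invertible_surjective by blast
  then show ?thesis unfolding col_space_def
  proof -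
    have "range ((*v) (X ** Y)) = (*v) X ` range ((*v) Y)"
      by (auto simp: image_image matrix_vector_mul_assoc)
    then show "range ((*v) (X ** Y)) = range ((*v) X)" using \<open>surj ((*v) Y)\<close> by simp
  qed
qed

lemma col_left:
  fixes X Y :: "real^'n^'n"
  shows "col_space (Y ** X) = (\<lambda>x. Y *v x) ` col_space X"
  unfolding col_space_def by (auto simp: image_image matrix_vector_mul_assoc)

lemma Rinv_props:
  fixes R :: "real^'d^'d"
  assumes "sym_pd R"
  shows "\<And>y. 0 \<le> y \<bullet> (matrix_inv R *v y)"
    and "\<And>y. y \<bullet> (matrix_inv R *v y) = 0 \<Longrightarrow> y = 0"
proof -
  have inv: "invertible R"
  proof (rule invertible_ker)
    fix x assume "R *v x = 0"
    then have "x \<bullet> (R *v x) = 0" by simp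
    then show "x = 0" using assms unfolding sym_pd_def by force
  qed
  note I = inv_props[OF inv]
  have key: "y \<bullet> (matrix_inv R *v y) = (matrix_inv R *v y) \<bullet> (R *v (matrix_inv R *v y))" for y
    by (simp add: matrix_vector_mul_assoc I inner_commute)
  have z: "matrix_inv R *v y = 0 \<Longrightarrow> y = 0" for y
    by (metis I(1) matrix_vector_mul_assoc matrix_vector_mul_lid matrix_vector_mult_0_right)
  show "0 \<le> y \<bullet> (matrix_inv R *v y)" for y
    using assms unfolding sym_pd_def key by (metis inner_zero_left order_le_less)
  show "y = 0" if "y \<bullet> (matrix_inv R *v y) = 0" for y
    using assms that z unfolding sym_pd_def key by (metis less_irrefl)
qed

theorem mainTheorem4:
  fixes M :: "nat \<Rightarrow> real^'n^'n"
    and H :: "nat \<Rightarrow> real^'n^'d"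
    and R :: "nat \<Rightarrow> real^'d^'d"
    and \<Omega> :: "nat \<Rightarrow> real^'n^'n"
    and P :: "nat \<Rightarrow> real^'n^'n"
  assumes M_inv: "\<And>k. k \<ge> 1 \<Longrightarrow> invertible (M k)"
    and R_pd: "\<And>k. sym_pd (R k)"
    and \<Omega>_def: "\<And>k. \<Omega> k = transpose (H k) ** matrix_inv (R k) ** H k"
    and P0: "sym_psd (P 0)"
    and P_rec: "\<And>k. P (Suc k) =
        M (Suc k) ** matrix_inv (mat 1 + P k ** \<Omega> k) ** P k ** transpose (M (Suc k))"
  shows "\<forall>k. rank (P (Suc k)) = rank (P k) \<and>
             col_space (P k) = (\<lambda>x. Mprod M k *v x) ` col_space (P 0)"
proof -
  have Om: "x \<bullet> (\<Omega> k *v x) = (H k *v x) \<bullet> (matrix_inv (R k) *v (H k *v x))" for k x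
  proof -
    have "\<Omega> k *v x = transpose (H k) *v (matrix_inv (R k) *v (H k *v x))"
      by (simp add: \<Omega>_def matrix_vector_mul_assoc matrix_mul_assoc)
    then show ?thesis using dot_mat[of x "transpose (H k)"] by simp
  qed
  have Om_psd: "0 \<le> x \<bullet> (\<Omega> k *v x)" for k x
    unfolding Om using Rinv_props(1)[OF R_pd] by blast
  have Om_zero: "x \<bullet> (\<Omega> k *v x) = 0 \<Longrightarrow> \<Omega> k *v x = 0" for k x
  proof -
    assume "x \<bullet> (\<Omega> k *v x) = 0"
    then have "H k *v x = 0" unfolding Om using Rinv_props(2)[OF R_pd] by blast
    then show ?thesis by (simp add: \<Omega>_def matrix_vector_mul_assoc[symmetric])
  qed
  \<comment> \<open>one step, assuming P k positive semidefinite\<close>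
  have step: "invertible (mat 1 + P k ** \<Omega> k) \<and> invertible (mat 1 + \<Omega> k ** P k) \<and>
     matrix_inv (mat 1 + P k ** \<Omega> k) ** P k = P k ** matrix_inv (mat 1 + \<Omega> k ** P k) \<and>
     (\<forall>x. 0 \<le> x \<bullet> (P (Suc k) *v x)) \<and>
     col_space (P (Suc k)) = (\<lambda>x. M (Suc k) *v x) ` col_space (P k)"
    if psd: "\<forall>x. 0 \<le> x \<bullet> (P k *v x)" for k
  proof -
    let ?A = "mat 1 + P k ** \<Omega> k" and ?B = "mat 1 + \<Omega> k ** P k"
    have A: "invertible ?A"
    proof (rule invertible_ker)
      fix x assume "?A *v x = 0"
      then have x: "x = - (P k *v (\<Omega> k *v x))"
        by (simp add: matrix_vector_mult_add_rdistrib matrix_vector_mul_assoc[symmetric] eq_neg_iff_add_eq_0)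
      have "x \<bullet> (\<Omega> k *v x) = - ((\<Omega> k *v x) \<bullet> (P k *v (\<Omega> k *v x)))"
        by (subst x) (simp add: inner_commute)
      also have "\<dots> \<le> 0" using psd by simp
      finally have "x \<bullet> (\<Omega> k *v x) = 0" using Om_psd[of x k] by linarith
      then have "\<Omega> k *v x = 0" by (rule Om_zero)
      then show "x = 0" using x by simp
    qed
    have B: "invertible ?B"
    proof (rule invertible_ker)
      fix y assume y: "?B *v y = 0"
      have "?A *v (P k *v y) = P k *v (?B *v y)"
        by (simp add: matrix_vector_mult_add_rdistrib matrix_vector_mul_assoc[symmetric]
            matrix_vector_right_distrib)
      then have "?A *v (P k *v y) = 0" using y by simp
      then have "P k *v y = 0"
        using A by (metis inj_matrix_vector_mult injD matrix_vector_mult_0_right)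
      then show "y = 0" using y
        by (simp add: matrix_vector_mult_add_rdistrib matrix_vector_mul_assoc[symmetric])
    qed
    have comm: "?A ** P k = P k ** ?B"
      by (simp add: mat_add_rdistrib matrix_add_ldistrib matrix_mul_assoc)
    have push: "matrix_inv ?A ** P k = P k ** matrix_inv ?B"
    proof -
      have "matrix_inv ?A ** P k = matrix_inv ?A ** P k ** (?B ** matrix_inv ?B)"
        using inv_props[OF B] by simp
      also have "\<dots> = matrix_inv ?A ** (?A ** P k) ** matrix_inv ?B"
        by (simp add: comm matrix_mul_assoc)
      also have "\<dots> = P k ** matrix_inv ?B"
        using inv_props[OF A] by (metis matrix_mul_assoc matrix_mul_lid)
      finally show ?thesis .
    qed
    have Pn: "P (Suc k) = M (Suc k) ** (P k ** (matrix_inv ?B ** transpose (M (Suc k))))"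
      unfolding P_rec by (metis matrix_mul_assoc push)
    have Mi: "invertible (M (Suc k))" using M_inv by simp
    have Mt: "invertible (transpose (M (Suc k)))"
      using Mi by (rule transpose_invertible)
    have col: "col_space (P (Suc k)) = (\<lambda>x. M (Suc k) *v x) ` col_space (P k)"
    proof -
      have "col_space (P k ** (matrix_inv ?B ** transpose (M (Suc k)))) = col_space (P k)"
        by (rule col_right_inv) (simp add: invertible_mult inv_invertible[OF B] Mt)
      then show ?thesis unfolding Pn by (simp only: col_left)
    qed
    have AP_psd: "0 \<le> z \<bullet> ((matrix_inv ?A ** P k) *v z)" for z
    proof -
      define u where "u = matrix_inv ?B *v z"
      have zu: "z = u + \<Omega> k *v (P k *v u)"
      proof -
        have "z = (?B ** matrix_inv ?B) *v z" using inv_props(1)[OF B] by simp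
        also have "\<dots> = ?B *v u" unfolding u_def by (simp add: matrix_vector_mul_assoc)
        also have "\<dots> = u + \<Omega> k *v (P k *v u)"
          by (simp add: matrix_vector_mult_add_rdistrib matrix_vector_mul_assoc)
        finally show ?thesis .
      qed
      have "(matrix_inv ?A ** P k) *v z = P k *v u"
        by (simp add: push u_def matrix_vector_mul_assoc)
      then have "z \<bullet> ((matrix_inv ?A ** P k) *v z) = u \<bullet> (P k *v u) + (P k *v u) \<bullet> (\<Omega> k *v (P k *v u))"
      proof -
        assume e: "(matrix_inv ?A ** P k) *v z = P k *v u"
        have "z \<bullet> (P k *v u) = (u + \<Omega> k *v (P k *v u)) \<bullet> (P k *v u)" using zu by simp
        then show ?thesis using e by (simp add: inner_add_left inner_add_right inner_commute)
      qed
      then show ?thesis using psd Om_psd by (metis add_nonneg_nonneg)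
    qed
    have psd': "0 \<le> x \<bullet> (P (Suc k) *v x)" for x
    proof -
      have "x \<bullet> (P (Suc k) *v x) = (transpose (M (Suc k)) *v x) \<bullet> ((matrix_inv ?A ** P k) *v (transpose (M (Suc k)) *v x))"
        by (simp add: P_rec dot_mat[of x "M (Suc k)"] matrix_vector_mul_assoc[symmetric])
      then show ?thesis using AP_psd by simp
    qed
    show ?thesis using A B push psd' col by blast
  qed
  have psd_all: "\<forall>x. 0 \<le> x \<bullet> (P k *v x)" for k
  proof (induction k)
    case 0 then show ?case using P0 unfolding sym_psd_def by blast
  next
    case (Suc k) then show ?case using step by blast
  qed
  show ?thesis
  proof
    fix k
    have c: "col_space (P (Suc k)) = (\<lambda>x. M (Suc k) *v x) ` col_space (P k)"
      using step psd_all by blast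
    have Mi: "inj ((*v) (M (Suc k)))" using M_inv[of "Suc k"] inj_matrix_vector_mult by simp
    have r: "rank (P (Suc k)) = rank (P k)"
      using c Mi unfolding rank_dim_range col_space_def
      by (metis eucl.dim_image_eq matrix_vector_mul_linear inj_on_subset subset_UNIV)
    have "col_space (P k) = (\<lambda>x. Mprod M k *v x) ` col_space (P 0)"
    proof (induction k)
      case 0 then show ?case by simp
    next
      case (Suc k)
      have "col_space (P (Suc k)) = (\<lambda>x. M (Suc k) *v x) ` col_space (P k)"
        using step psd_all by blast
      then show ?case using Suc by (simp add: image_image matrix_vector_mul_assoc)
    qed
    then show "rank (P (Suc k)) = rank (P k) \<and>
             col_space (P k) = (\<lambda>x. Mprod M k *v x) ` col_space (P 0)" using r by blast
  qed
qed

end
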